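(* Suppose the weights $w^{(1)},w^{(2)}:\mathbb N_0\to\mathbb C$ satisfy the discrete Pearson equations $\theta(k+1)w^{(a)}(k+1)=\sigma^{(a)}(k)w^{(a)}(k)$ for all $k\in\mathbb N_0$ and $a\in\{1,2\}$, where $\theta,\sigma^{(1)},\sigma^{(2)}$ are polynomials with $\theta(0)=0$. Then the moment matrix satisfies \[ \theta(\Lambda)\mathscr M=L\,\mathscr M\left(L^{(1)}\sigma^{(1)}(\Lambda^{(1)})+L^{(2)}\sigma^{(2)}(\Lambda^{(2)})\right)^\top. \]
   Context: Let $X(x)=(1,x,x^2,\dots)^\top$, $X^{(1)}(x)=(1,0,x,0,x^2,0,\dots)^\top$, $X^{(2)}(x)=(0,1,0,x,0,x^2,\dots)^\top$. The moment matrix is the semi-infinite matrix $\mathscr M=\sum_{k=0}^\infty X(k)\big(w^{(1)}(k)X^{(1)}(k)+w^{(2)}(k)X^{(2)}(k)\big)^\top$ (all series assumed absolutely convergent). $\Lambda$ is the semi-infinite matrix with ones on the first superdiagonal and zeros elsewhere; $I^{(1)}=\operatorname{diag}(1,0,1,0,\dots)$, $I^{(2)}=\operatorname{diag}(0,1,0,1,\dots)$, $\Lambda^{(a)}=\Lambda^2I^{(a)}$. $L$ is the lower triangular Pascal matrix, $L_{n,m}=\binom nm$ for $n\ge m$ and $0$ otherwise (indices from $0$). For $a\in\{1,2\}$, $L^{(a)}$ is the semi-infinite matrix whose only nonzero entries are $L^{(a)}_{2n+a-1,2m+a-1}=\binom nm$ for $n\ge m\ge0$. *)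

theory Defs
  imports "HOL-Analysis.Analysis" "HOL-Computational_Algebra.Polynomial"
begin

type_synonym cmat = "nat \<Rightarrow> nat \<Rightarrow> complex"

text \<open>Matrix product; all products occurring in the statement have finitely
  supported summands, so the (unconditional) infinite sum is a finite sum.\<close>
definition mmult :: "cmat \<Rightarrow> cmat \<Rightarrow> cmat" where
  "mmult A B = (\<lambda>i j. \<Sum>\<^sub>\<infinity>k. A i k * B k j)"

definition madd :: "cmat \<Rightarrow> cmat \<Rightarrow> cmat" where
  "madd A B = (\<lambda>i j. A i j + B i j)"

definition mtrans :: "cmat \<Rightarrow> cmat" where
  "mtrans A = (\<lambda>i j. A j i)"

definition mid :: cmat where
  "mid = (\<lambda>i j. if i = j then 1 else 0)"

definition mpow :: "cmat \<Rightarrow> nat \<Rightarrow> cmat" where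
  "mpow A n = ((mmult A) ^^ n) mid"

definition mpoly :: "complex poly \<Rightarrow> cmat \<Rightarrow> cmat" where
  "mpoly p A = (\<lambda>i j. \<Sum>k\<le>degree p. coeff p k * mpow A k i j)"

definition Lam :: cmat where
  "Lam = (\<lambda>i j. if j = Suc i then 1 else 0)"

text \<open>I^(1) = diag(1,0,1,0,...), I^(2) = diag(0,1,0,1,...); a \<in> {1,2}.\<close>
definition Iproj :: "nat \<Rightarrow> cmat" where
  "Iproj a = (\<lambda>i j. if i = j \<and> i mod 2 = a - 1 then 1 else 0)"

definition Lam_a :: "nat \<Rightarrow> cmat" where
  "Lam_a a = mmult (mpow Lam 2) (Iproj a)"

definition Pascal :: cmat where
  "Pascal = (\<lambda>n m. of_nat (n choose m))"

definition Pascal_a :: "nat \<Rightarrow> cmat" where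
  "Pascal_a a = (\<lambda>i j. if i mod 2 = a - 1 \<and> j mod 2 = a - 1
                        then of_nat ((i div 2) choose (j div 2)) else 0)"

definition X1 :: "complex \<Rightarrow> nat \<Rightarrow> complex" where
  "X1 x j = (if even j then x ^ (j div 2) else 0)"

definition X2 :: "complex \<Rightarrow> nat \<Rightarrow> complex" where
  "X2 x j = (if odd j then x ^ (j div 2) else 0)"

definition moment :: "(nat \<Rightarrow> complex) \<Rightarrow> (nat \<Rightarrow> complex) \<Rightarrow> cmat" where
  "moment w1 w2 = (\<lambda>i j. \<Sum>k. (of_nat k) ^ i *
       (w1 k * X1 (of_nat k) j + w2 k * X2 (of_nat k) j))"

end

theory Submission
  imports Defs
begin

lemma infsum_fin:
  fixes f :: "nat \<Rightarrow> complex"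
  assumes "finite S" "\<And>k. k \<notin> S \<Longrightarrow> f k = 0"
  shows "(\<Sum>\<^sub>\<infinity>k. f k) = sum f S"
proof -
  have "(\<Sum>\<^sub>\<infinity>k. f k) = infsum f S"
    by (rule infsum_cong_neutral) (use assms in auto)
  also have "\<dots> = sum f S" using assms(1) by simp
  finally show ?thesis .
qed

lemma left_lem:
  fixes a :: "nat \<Rightarrow> complex" and F :: "nat \<Rightarrow> nat \<Rightarrow> complex"
  assumes "finite S" "\<And>k. k \<notin> S \<Longrightarrow> a k = 0" "\<And>k. summable (\<lambda>n. F n k)"
  shows "(\<Sum>\<^sub>\<infinity>k. a k * (\<Sum>n. F n k)) = (\<Sum>n. \<Sum>k\<in>S. a k * F n k)"
proof -
  have "(\<Sum>\<^sub>\<infinity>k. a k * (\<Sum>n. F n k)) = (\<Sum>k\<in>S. a k * (\<Sum>n. F n k))"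
    by (rule infsum_fin) (use assms in auto)
  also have "\<dots> = (\<Sum>k\<in>S. (\<Sum>n. a k * F n k))"
    using assms(3) by (simp add: suminf_mult)
  also have "\<dots> = (\<Sum>n. \<Sum>k\<in>S. a k * F n k)"
    by (rule suminf_sum[symmetric]) (use assms(3) summable_mult in auto)
  finally show ?thesis .
qed

lemma right_lem:
  fixes b :: "nat \<Rightarrow> complex" and F :: "nat \<Rightarrow> nat \<Rightarrow> complex"
  assumes "finite S" "\<And>k. k \<notin> S \<Longrightarrow> b k = 0" "\<And>k. summable (\<lambda>n. F n k)"
  shows "(\<Sum>\<^sub>\<infinity>k. (\<Sum>n. F n k) * b k) = (\<Sum>n. \<Sum>k\<in>S. F n k * b k)"
proof -
  have "(\<Sum>\<^sub>\<infinity>k. (\<Sum>n. F n k) * b k) = (\<Sum>k\<in>S. (\<Sum>n. F n k) * b k)"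
    by (rule infsum_fin) (use assms in auto)
  also have "\<dots> = (\<Sum>k\<in>S. (\<Sum>n. F n k * b k))"
    using assms(3) by (simp add: suminf_mult2)
  also have "\<dots> = (\<Sum>n. \<Sum>k\<in>S. F n k * b k)"
    by (rule suminf_sum[symmetric]) (use assms(3) summable_mult2 in auto)
  finally show ?thesis .
qed

lemma mpow_Suc: "mpow A (Suc k) = mmult A (mpow A k)"
  by (simp add: mpow_def)

lemma mmult_Lam: "mmult Lam B i j = B (Suc i) j"
proof -
  have "mmult Lam B i j = (\<Sum>l\<in>{Suc i}. Lam i l * B l j)"
    unfolding mmult_def by (rule infsum_fin) (auto simp: Lam_def)
  then show ?thesis by (simp add: Lam_def)
qed

lemma mpow_Lam: "mpow Lam k i j = (if j = i + k then 1 else 0)"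
proof (induction k arbitrary: i)
  case 0
  then show ?case by (simp add: mpow_def mid_def)
next
  case (Suc k)
  then show ?case by (simp add: mpow_Suc mmult_Lam)
qed

lemma Lam_a_eq: "Lam_a a i j = (if j = i + 2 \<and> j mod 2 = a - 1 then 1 else 0)"
proof -
  have "Lam_a a i j = (\<Sum>l\<in>{i+2}. mpow Lam 2 i l * Iproj a l j)"
    unfolding Lam_a_def mmult_def by (rule infsum_fin) (auto simp: mpow_Lam)
  then show ?thesis by (simp add: mpow_Lam Iproj_def)
qed

lemma mmult_Lam_a: "mmult (Lam_a a) B i j = (if (i+2) mod 2 = a - 1 then B (i+2) j else 0)"
proof -
  have "mmult (Lam_a a) B i j = (\<Sum>l\<in>{i+2}. Lam_a a i l * B l j)"
    unfolding mmult_def by (rule infsum_fin) (auto simp: Lam_a_eq)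
  then show ?thesis by (simp add: Lam_a_eq)
qed

lemma mpow_Lam_a: "mpow (Lam_a a) k r p = (if p = r + 2*k \<and> (k = 0 \<or> p mod 2 = a - 1) then 1 else 0)"
proof (induction k arbitrary: r)
  case 0
  then show ?case by (simp add: mpow_def mid_def)
next
  case (Suc k)
  show ?case using Suc.IH[of "r+2"] by (simp add: mpow_Suc mmult_Lam_a) (auto)
qed

lemma mpoly_Lam: "mpoly p Lam i k = (\<Sum>l\<le>degree p. coeff p l * (if k = i + l then 1 else 0))"
  by (simp add: mpoly_def mpow_Lam)

lemma mpoly_Lam_zero: "k \<notin> {..i + degree p} \<Longrightarrow> mpoly p Lam i k = 0"
  by (auto simp: mpoly_Lam intro!: sum.neutral)

lemma mpoly_Lam_row:
  "(\<Sum>k\<in>{..i + degree p}. mpoly p Lam i k * z ^ k) = z ^ i * poly p z"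
proof -
  have "(\<Sum>k\<in>{..i + degree p}. mpoly p Lam i k * z ^ k)
      = (\<Sum>k\<in>{..i + degree p}. \<Sum>l\<le>degree p. coeff p l * (if k = i + l then z ^ k else 0))"
    unfolding mpoly_Lam sum_distrib_right by (rule sum.cong, simp, rule sum.cong, simp, simp)
  also have "\<dots> = (\<Sum>l\<le>degree p. \<Sum>k\<in>{..i + degree p}. coeff p l * (if k = i + l then z ^ k else 0))"
    by (rule sum.swap)
  also have "\<dots> = (\<Sum>l\<le>degree p. coeff p l * z ^ (i + l))"
    by (rule sum.cong) (auto simp: sum_distrib_left[symmetric] sum.delta')
  also have "\<dots> = z ^ i * poly p z"
    by (simp add: poly_altdef sum_distrib_left power_add mult_ac)
  finally show ?thesis .
qed

definition Yv :: "(nat \<Rightarrow> complex) \<Rightarrow> (nat \<Rightarrow> complex) \<Rightarrow> nat \<Rightarrow> nat \<Rightarrow> complex" where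
  "Yv w1 w2 n p = (if even p then w1 n else w2 n) * of_nat n ^ (p div 2)"

lemma moment_eq: "moment w1 w2 i j = (\<Sum>n. of_nat n ^ i * Yv w1 w2 n j)"
  by (cases "even j") (simp_all add: moment_def Yv_def X1_def X2_def)

lemma mpoly_Lam_a: "mpoly p (Lam_a a) r q =
   (\<Sum>l\<le>degree p. coeff p l * (if q = r + 2*l \<and> (l = 0 \<or> q mod 2 = a - 1) then 1 else 0))"
  by (simp add: mpoly_def mpow_Lam_a)

lemma mpoly_Lam_a_zero: "r + 2 * degree p < q \<Longrightarrow> mpoly p (Lam_a a) r q = 0"
  by (auto simp: mpoly_Lam_a intro!: sum.neutral)

lemma V1:
  assumes "r mod 2 = a - 1" "finite P" "{..r + 2 * degree p} \<subseteq> P"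
  shows "(\<Sum>q\<in>P. mpoly p (Lam_a a) r q * Yv w1 w2 n q) = Yv w1 w2 n r * poly p (of_nat n)"
proof -
  have "(\<Sum>q\<in>P. mpoly p (Lam_a a) r q * Yv w1 w2 n q)
     = (\<Sum>l\<le>degree p. \<Sum>q\<in>P. coeff p l * (if q = r + 2*l then Yv w1 w2 n q else 0))"
    unfolding mpoly_Lam_a sum_distrib_right
    by (subst sum.swap) (rule sum.cong, simp, rule sum.cong, simp, use assms(1) in auto)
  also have "\<dots> = (\<Sum>l\<le>degree p. coeff p l * Yv w1 w2 n (r + 2*l))"
  proof (rule sum.cong)
    fix l assume "l \<in> {..degree p}"
    then have "r + 2*l \<in> P" using assms(3) by auto
    then show "(\<Sum>q\<in>P. coeff p l * (if q = r + 2*l then Yv w1 w2 n q else 0)) = coeff p l * Yv w1 w2 n (r + 2*l)"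
      using assms(2) by (simp add: sum_distrib_left[symmetric] sum.delta')
  qed simp
  also have "\<dots> = (\<Sum>l\<le>degree p. coeff p l * (Yv w1 w2 n r * of_nat n ^ l))"
    by (rule sum.cong) (auto simp: Yv_def power_add)
  also have "\<dots> = Yv w1 w2 n r * poly p (of_nat n)"
    by (simp add: poly_altdef sum_distrib_left mult_ac)
  finally show ?thesis .
qed

lemma G:
  assumes "e < (2::nat)"
  shows "(\<Sum>r<2*K. (if r mod 2 = e then g (r div 2) else (0::complex))) = (\<Sum>m<K. g m)"
proof (induction K)
  case 0 then show ?case by simp
next
  case (Suc K)
  have "2 * Suc K = Suc (Suc (2*K))" by simp
  then show ?case using Suc assms by (simp add: lessThan_Suc)
qed

lemma V2:
  assumes "a = 1 \<or> a = 2"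
  shows "(\<Sum>r<2*(j div 2 + 1). Pascal_a a j r * (Yv w1 w2 n r * s))
      = (if j mod 2 = a - 1 then (if even j then w1 n else w2 n) * s * (of_nat n + 1) ^ (j div 2) else 0)"
proof (cases "j mod 2 = a - 1")
  case False
  then show ?thesis by (simp add: Pascal_a_def)
next
  case True
  define W where "W = (if even j then w1 n else w2 n)"
  have "(\<Sum>r<2*(j div 2 + 1). Pascal_a a j r * (Yv w1 w2 n r * s))
      = (\<Sum>r<2*(j div 2 + 1). (if r mod 2 = j mod 2 then of_nat ((j div 2) choose (r div 2)) * (W * of_nat n ^ (r div 2) * s) else 0))"
  proof (rule sum.cong)
    fix r
    show "Pascal_a a j r * (Yv w1 w2 n r * s) = (if r mod 2 = j mod 2 then of_nat ((j div 2) choose (r div 2)) * (W * of_nat n ^ (r div 2) * s) else 0)"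
    proof (cases "r mod 2 = j mod 2")
      case True
      then have "even r = even j" by presburger
      then show ?thesis using True \<open>j mod 2 = a - 1\<close> by (simp add: Pascal_a_def Yv_def W_def mult_ac)
    next
      case False
      then show ?thesis using \<open>j mod 2 = a - 1\<close> by (simp add: Pascal_a_def)
    qed
  qed simp
  also have "\<dots> = (\<Sum>m<j div 2 + 1. of_nat ((j div 2) choose m) * (W * of_nat n ^ m * s))"
    by (rule G) simp
  also have "\<dots> = W * s * (\<Sum>m\<le>j div 2. of_nat ((j div 2) choose m) * of_nat n ^ m * 1 ^ (j div 2 - m))"
    unfolding lessThan_Suc_atMost[symmetric] Suc_eq_plus1[symmetric] sum_distrib_left
    by (rule sum.cong) (simp_all add: mult_ac)
  also have "\<dots> = W * s * (of_nat n + 1) ^ (j div 2)"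
    by (simp add: binomial_ring)
  finally show ?thesis using True W_def by simp
qed

definition T :: "nat \<Rightarrow> complex poly \<Rightarrow> cmat" where
  "T a p = mmult (Pascal_a a) (mpoly p (Lam_a a))"

lemma Pascal_a_zero: "r \<notin> {..<2*(j div 2 + 1)} \<Longrightarrow> Pascal_a a j r = 0"
  by (auto simp: Pascal_a_def)

lemma T_eq: "T a p j q = (\<Sum>r<2*(j div 2 + 1). Pascal_a a j r * mpoly p (Lam_a a) r q)"
  unfolding T_def mmult_def by (rule infsum_fin) (auto simp: Pascal_a_zero)

lemma T_zero: "2*(j div 2) + 1 + 2*degree p < q \<Longrightarrow> T a p j q = 0"
  unfolding T_eq by (rule sum.neutral) (auto intro!: mpoly_Lam_a_zero)

lemma T_Y:
  assumes "a = 1 \<or> a = 2" "finite P" "{..2*(j div 2) + 1 + 2*degree p} \<subseteq> P"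
  shows "(\<Sum>q\<in>P. T a p j q * Yv w1 w2 n q)
      = (if j mod 2 = a - 1 then (if even j then w1 n else w2 n) * poly p (of_nat n) * (of_nat n + 1) ^ (j div 2) else 0)"
proof -
  have "(\<Sum>q\<in>P. T a p j q * Yv w1 w2 n q)
      = (\<Sum>r<2*(j div 2 + 1). Pascal_a a j r * (\<Sum>q\<in>P. mpoly p (Lam_a a) r q * Yv w1 w2 n q))"
    unfolding T_eq sum_distrib_right sum_distrib_left
    by (subst sum.swap) (simp add: mult_ac)
  also have "\<dots> = (\<Sum>r<2*(j div 2 + 1). Pascal_a a j r * (Yv w1 w2 n r * poly p (of_nat n)))"
  proof (rule sum.cong)
    fix r assume r: "r \<in> {..<2*(j div 2 + 1)}"
    show "Pascal_a a j r * (\<Sum>q\<in>P. mpoly p (Lam_a a) r q * Yv w1 w2 n q) = Pascal_a a j r * (Yv w1 w2 n r * poly p (of_nat n))"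
    proof (cases "r mod 2 = a - 1")
      case True
      have "{..r + 2 * degree p} \<subseteq> P" using r assms(3) by auto
      then show ?thesis using V1[OF True assms(2)] by simp
    next
      case False
      then show ?thesis by (simp add: Pascal_a_def)
    qed
  qed simp
  finally show ?thesis using V2[OF assms(1)] by simp
qed

lemma sum_poly:
  fixes w :: "nat \<Rightarrow> complex"
  assumes "\<And>k. summable (\<lambda>n. norm ((of_nat n :: complex) ^ k * w n))"
  shows "summable (\<lambda>n. poly P (of_nat n) * w n)"
proof -
  have "summable (\<lambda>n. \<Sum>k\<le>degree P. coeff P k * ((of_nat n :: complex) ^ k * w n))"
    by (rule summable_sum, rule summable_mult, rule summable_norm_cancel, rule assms)
  moreover have "\<And>n. poly P (of_nat n) * w n = (\<Sum>k\<le>degree P. coeff P k * ((of_nat n :: complex) ^ k * w n))"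
    by (simp add: poly_altdef sum_distrib_right mult.assoc)
  ultimately show ?thesis by simp
qed

lemma sum_Yv:
  assumes abs1: "\<And>n. summable (\<lambda>k. norm ((of_nat k :: complex) ^ n * w1 k))"
      and abs2: "\<And>n. summable (\<lambda>k. norm ((of_nat k :: complex) ^ n * w2 k))"
  shows "summable (\<lambda>n. of_nat n ^ k * Yv w1 w2 n p)"
proof (cases "even p")
  case True
  then show ?thesis using summable_norm_cancel[OF abs1[of "k + p div 2"]]
    by (simp add: Yv_def power_add mult_ac)
next
  case False
  then show ?thesis using summable_norm_cancel[OF abs2[of "k + p div 2"]]
    by (simp add: Yv_def power_add mult_ac)
qed

lemma poly_11: "poly ([:1,1:]^h) (x::complex) = (x+1)^h"
  by (simp add: poly_power add.commute)
lemma polyZ: "(x::complex) ^ q * (W * poly S x * (x + 1) ^ h) = poly (monom 1 q * [:1,1:] ^ h * S) x * W"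
  by (simp only: poly_mult poly_monom poly_11) (simp add: mult_ac)
lemma polyg: "(x::complex) ^ i * poly Q x * (W * x ^ h) = poly (Q * monom 1 (i + h)) x * W"
  by (simp only: poly_mult poly_monom) (simp add: power_add mult_ac)

definition Bm :: "complex poly \<Rightarrow> complex poly \<Rightarrow> cmat" where
  "Bm s1 s2 = mtrans (madd (mmult (Pascal_a 1) (mpoly s1 (Lam_a 1)))
                         (mmult (Pascal_a 2) (mpoly s2 (Lam_a 2))))"
definition Pset :: "complex poly \<Rightarrow> complex poly \<Rightarrow> nat \<Rightarrow> nat set" where
  "Pset s1 s2 j = {..2*(j div 2) + 1 + 2*(degree s1 + degree s2)}"
definition Wf :: "(nat \<Rightarrow> complex) \<Rightarrow> (nat \<Rightarrow> complex) \<Rightarrow> nat \<Rightarrow> nat \<Rightarrow> complex" where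
  "Wf w1 w2 j = (if even j then w1 else w2)"
definition Sf :: "complex poly \<Rightarrow> complex poly \<Rightarrow> nat \<Rightarrow> complex poly" where
  "Sf s1 s2 j = (if even j then s1 else s2)"
definition Zf where
  "Zf w1 w2 s1 s2 j n = Wf w1 w2 j n * poly (Sf s1 s2 j) (of_nat n) * (of_nat n + 1) ^ (j div 2)"

lemma B_eq: "Bm s1 s2 q j = T 1 s1 j q + T 2 s2 j q"
  by (simp add: Bm_def mtrans_def madd_def T_def)

lemma B_zero: "q \<notin> Pset s1 s2 j \<Longrightarrow> Bm s1 s2 q j = 0"
  unfolding B_eq Pset_def by (auto simp: T_zero)

lemma absW:
  assumes abs1: "\<And>n. summable (\<lambda>k. norm ((of_nat k :: complex) ^ n * w1 k))"
      and abs2: "\<And>n. summable (\<lambda>k. norm ((of_nat k :: complex) ^ n * w2 k))"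
  shows "summable (\<lambda>n. norm ((of_nat n :: complex) ^ k * Wf w1 w2 j n))"
  using abs1 abs2 by (simp add: Wf_def)

lemma BY: "(\<Sum>q\<in>Pset s1 s2 j. Yv w1 w2 n q * Bm s1 s2 q j) = Zf w1 w2 s1 s2 j n"
proof -
  have finP: "finite (Pset s1 s2 j)" by (simp add: Pset_def)
  have jm: "even j \<Longrightarrow> j mod 2 = 0" "odd j \<Longrightarrow> j mod 2 = 1" by presburger+
  have sub1: "{..2*(j div 2) + 1 + 2*degree s1} \<subseteq> Pset s1 s2 j" and sub2: "{..2*(j div 2) + 1 + 2*degree s2} \<subseteq> Pset s1 s2 j"
    by (auto simp: Pset_def)
  have "(\<Sum>q\<in>Pset s1 s2 j. Yv w1 w2 n q * Bm s1 s2 q j) = (\<Sum>q\<in>Pset s1 s2 j. T 1 s1 j q * Yv w1 w2 n q) + (\<Sum>q\<in>Pset s1 s2 j. T 2 s2 j q * Yv w1 w2 n q)"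
    by (simp add: B_eq sum.distrib algebra_simps)
  also have "\<dots> = Zf w1 w2 s1 s2 j n"
    using T_Y[of 1 "Pset s1 s2 j" j s1 w1 w2 n] T_Y[of 2 "Pset s1 s2 j" j s2 w1 w2 n] sub1 sub2 finP jm
    by (auto simp: Wf_def Sf_def Zf_def)
  finally show ?thesis .
qed

lemma MB:
  assumes abs1: "\<And>n. summable (\<lambda>k. norm ((of_nat k :: complex) ^ n * w1 k))"
      and abs2: "\<And>n. summable (\<lambda>k. norm ((of_nat k :: complex) ^ n * w2 k))"
  shows "mmult (moment w1 w2) (Bm s1 s2) q j = (\<Sum>n. of_nat n ^ q * Zf w1 w2 s1 s2 j n)"
proof -
  have "mmult (moment w1 w2) (Bm s1 s2) q j = (\<Sum>\<^sub>\<infinity>p. (\<Sum>n. of_nat n ^ q * Yv w1 w2 n p) * Bm s1 s2 p j)"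
    by (simp add: mmult_def moment_eq)
  also have "\<dots> = (\<Sum>n. \<Sum>p\<in>Pset s1 s2 j. of_nat n ^ q * Yv w1 w2 n p * Bm s1 s2 p j)"
    by (rule right_lem) (auto simp: Pset_def B_zero sum_Yv[OF abs1 abs2])
  also have "\<dots> = (\<Sum>n. of_nat n ^ q * Zf w1 w2 s1 s2 j n)"
    by (simp only: BY[symmetric] sum_distrib_left mult.assoc)
  finally show ?thesis .
qed

lemma sumZ:
  assumes abs1: "\<And>n. summable (\<lambda>k. norm ((of_nat k :: complex) ^ n * w1 k))"
      and abs2: "\<And>n. summable (\<lambda>k. norm ((of_nat k :: complex) ^ n * w2 k))"
  shows "summable (\<lambda>n. of_nat n ^ q * Zf w1 w2 s1 s2 j n)"
proof -
  have "summable (\<lambda>n. poly (monom 1 q * [:1,1:] ^ (j div 2) * Sf s1 s2 j) (of_nat n) * Wf w1 w2 j n)"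
    by (rule sum_poly[OF absW[OF abs1 abs2]])
  then show ?thesis by (simp only: Zf_def polyZ)
qed

lemma RHS1:
  assumes abs1: "\<And>n. summable (\<lambda>k. norm ((of_nat k :: complex) ^ n * w1 k))"
      and abs2: "\<And>n. summable (\<lambda>k. norm ((of_nat k :: complex) ^ n * w2 k))"
  shows "mmult Pascal (mmult (moment w1 w2) (Bm s1 s2)) i j = (\<Sum>n. (of_nat n + 1) ^ i * Zf w1 w2 s1 s2 j n)"
proof -
  have "mmult Pascal (mmult (moment w1 w2) (Bm s1 s2)) i j = (\<Sum>\<^sub>\<infinity>q. of_nat (i choose q) * (\<Sum>n. of_nat n ^ q * Zf w1 w2 s1 s2 j n))"
    by (simp only: mmult_def[of Pascal] MB[OF abs1 abs2]) (simp add: Pascal_def)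
  also have "\<dots> = (\<Sum>n. \<Sum>q\<in>{..i}. of_nat (i choose q) * (of_nat n ^ q * Zf w1 w2 s1 s2 j n))"
    by (rule left_lem) (auto simp: sumZ[OF abs1 abs2])
  also have "\<dots> = (\<Sum>n. (of_nat n + 1) ^ i * Zf w1 w2 s1 s2 j n)"
    by (simp add: binomial_ring sum_distrib_left sum_distrib_right mult_ac)
  finally show ?thesis .
qed

lemma LHS1:
  assumes abs1: "\<And>n. summable (\<lambda>k. norm ((of_nat k :: complex) ^ n * w1 k))"
      and abs2: "\<And>n. summable (\<lambda>k. norm ((of_nat k :: complex) ^ n * w2 k))"
  shows "mmult (mpoly th Lam) (moment w1 w2) i j = (\<Sum>n. of_nat n ^ i * poly th (of_nat n) * Yv w1 w2 n j)"
proof -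
  have "mmult (mpoly th Lam) (moment w1 w2) i j = (\<Sum>\<^sub>\<infinity>k. mpoly th Lam i k * (\<Sum>n. of_nat n ^ k * Yv w1 w2 n j))"
    by (simp add: mmult_def moment_eq)
  also have "\<dots> = (\<Sum>n. \<Sum>k\<in>{..i + degree th}. mpoly th Lam i k * (of_nat n ^ k * Yv w1 w2 n j))"
    by (rule left_lem) (auto simp: mpoly_Lam_zero sum_Yv[OF abs1 abs2])
  also have "\<dots> = (\<Sum>n. of_nat n ^ i * poly th (of_nat n) * Yv w1 w2 n j)"
    by (simp add: mult.assoc[symmetric] sum_distrib_right[symmetric] mpoly_Lam_row)
  finally show ?thesis .
qed

lemma sumg:
  assumes abs1: "\<And>n. summable (\<lambda>k. norm ((of_nat k :: complex) ^ n * w1 k))"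
      and abs2: "\<And>n. summable (\<lambda>k. norm ((of_nat k :: complex) ^ n * w2 k))"
  shows "summable (\<lambda>m. of_nat m ^ i * poly th (of_nat m) * Yv w1 w2 m j)"
proof -
  have "summable (\<lambda>n. poly (th * monom 1 (i + j div 2)) (of_nat n) * Wf w1 w2 j n)"
    by (rule sum_poly[OF absW[OF abs1 abs2]])
  moreover have "Yv w1 w2 m j = Wf w1 w2 j m * of_nat m ^ (j div 2)" for m
    by (simp add: Yv_def Wf_def)
  ultimately show ?thesis by (simp only: polyg)
qed

lemma shift_term:
  assumes pearson1: "\<And>k. poly th (of_nat (Suc k)) * w1 (Suc k) = poly s1 (of_nat k) * w1 k"
      and pearson2: "\<And>k. poly th (of_nat (Suc k)) * w2 (Suc k) = poly s2 (of_nat k) * w2 k"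
  shows "(of_nat n + 1) ^ i * Zf w1 w2 s1 s2 j n
       = of_nat (Suc n) ^ i * poly th (of_nat (Suc n)) * Yv w1 w2 (Suc n) j"
proof -
  have pearW: "poly th (of_nat (Suc n)) * Wf w1 w2 j (Suc n) = poly (Sf s1 s2 j) (of_nat n) * Wf w1 w2 j n"
    using pearson1 pearson2 by (simp add: Wf_def Sf_def)
  have "of_nat (Suc n) ^ i * poly th (of_nat (Suc n)) * Yv w1 w2 (Suc n) j
      = (of_nat n + 1) ^ i * (poly th (of_nat (Suc n)) * Wf w1 w2 j (Suc n)) * (of_nat n + 1) ^ (j div 2)"
    by (simp add: Yv_def Wf_def mult_ac add.commute)
  also have "\<dots> = (of_nat n + 1) ^ i * Zf w1 w2 s1 s2 j n"
    unfolding pearW by (simp add: Zf_def mult_ac)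
  finally show ?thesis by simp
qed

theorem mainTheorem5:
  fixes w1 w2 :: "nat \<Rightarrow> complex" and \<theta> \<sigma>1 \<sigma>2 :: "complex poly"
  assumes abs1: "\<And>n. summable (\<lambda>k. norm ((of_nat k :: complex) ^ n * w1 k))"
      and abs2: "\<And>n. summable (\<lambda>k. norm ((of_nat k :: complex) ^ n * w2 k))"
      and pearson1: "\<And>k. poly \<theta> (of_nat (Suc k)) * w1 (Suc k) = poly \<sigma>1 (of_nat k) * w1 k"
      and pearson2: "\<And>k. poly \<theta> (of_nat (Suc k)) * w2 (Suc k) = poly \<sigma>2 (of_nat k) * w2 k"
      and theta0: "poly \<theta> 0 = 0"
  shows "mmult (mpoly \<theta> Lam) (moment w1 w2) =
         mmult Pascal (mmult (moment w1 w2)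
           (mtrans (madd (mmult (Pascal_a 1) (mpoly \<sigma>1 (Lam_a 1)))
                         (mmult (Pascal_a 2) (mpoly \<sigma>2 (Lam_a 2))))))"
proof (rule ext, rule ext)
  fix i j :: nat
  let ?g = "\<lambda>m. of_nat m ^ i * poly \<theta> (of_nat m) * Yv w1 w2 m j"
  have "mmult Pascal (mmult (moment w1 w2) (Bm \<sigma>1 \<sigma>2)) i j = (\<Sum>n. ?g (Suc n))"
    unfolding RHS1[OF abs1 abs2] shift_term[OF pearson1 pearson2] ..
  also have "\<dots> = suminf ?g"
    using suminf_split_head[OF sumg[OF abs1 abs2, of i \<theta> j]] by (simp add: theta0)
  also have "\<dots> = mmult (mpoly \<theta> Lam) (moment w1 w2) i j"
    by (rule LHS1[OF abs1 abs2, symmetric])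
  finally show "mmult (mpoly \<theta> Lam) (moment w1 w2) i j = mmult Pascal (mmult (moment w1 w2)
           (mtrans (madd (mmult (Pascal_a 1) (mpoly \<sigma>1 (Lam_a 1)))
                         (mmult (Pascal_a 2) (mpoly \<sigma>2 (Lam_a 2)))))) i j"
    by (simp add: Bm_def)
qed

end
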